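(* Let $(X,\langle\cdot,\cdot\rangle,\|\cdot\|)$ be a separable Hilbert space, $A:D(A)\subset X\to X$ a densely defined self-adjoint linear operator with $\langle Ax,x\rangle\ge0$ for all $x\in D(A)$ and with $(\lambda I+A)^{-1}$ compact for some $\lambda>0$; let $0\le\lambda_1\le\lambda_2\le\dots$ be its eigenvalues with associated orthonormal eigenbasis $\{\varphi_k\}_{k\ge1}$. Let $B:D(B)\subset X\to X$ be linear with $D(A^{1/2})\subset D(B)$ and $\|B\varphi\|\le C_B\|\varphi\|_{1/2}$ for all $\varphi\in D(A^{1/2})$, for some constant $C_B>0$. Let $T>0$, let $N(T)>0$ be a constant, let $v_0\in D(A^{1/2})$ satisfy $N(T)\|v_0\|_{1/2}\le1$, and let $p\in L^2(0,T)$ satisfy $\|p\|_{L^2(0,T)}\le N(T)\|v_0\|$. Let $v$ be the solution of $$v'(t)+Av(t)+p(t)Bv(t)+p(t)B\varphi_1=0,\ t\in[0,T],\qquad v(0)=v_0,$$ and let $w(\cdot;0,p)$ be the solution of $$w'(t)+Aw(t)+p(t)Bv(t)=0,\ t\in[0,T],\qquad w(0)=0.$$ Then $$\|w(T;0,p)\|_{1/2}\le K(T)\|v_0\|_{1/2}^2,$$ where $K(T)^2:=2e^{C_4(T)}C_B^2N(T)^2C_5(T)$ with $$C_4(T):=C_B\Big(\tfrac52C_B+2\sqrt T\Big)+2T,\qquad C_5(T):=1+\tfrac52C_B^2(1+\lambda_1^{1/2})^2N(T)^2+\tfrac32C_B^2\big(C_B^2(1+\lambda_1^{1/2})^2N(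T)^2+1\big).$$
   Context: For $s\ge0$, $D(A^s)=\{x:\sum_k\lambda_k^{2s}|\langle x,\varphi_k\rangle|^2<\infty\}$, $A^sx=\sum_k\lambda_k^s\langle x,\varphi_k\rangle\varphi_k$, and $\|x\|_{s}:=\|x\|_{D(A^s)}=(\|x\|^2+\|A^sx\|^2)^{1/2}$. Solutions are understood as the unique mild (equivalently strict) solutions, belonging to $C([0,T];D(A^{1/2}))\cap H^1(0,T;X)\cap L^2(0,T;D(A))$. *)

theory Defs
  imports "HOL-Analysis.Analysis"
begin

text \<open>The nonnegative self-adjoint operator A with compact resolvent is represented by its
spectral data: nondecreasing eigenvalues lam k (k = 0,1,2,..., i.e. the paper's lambda_(k+1))
and an orthonormal eigenbasis phi k.\<close>

definition is_onb :: "(nat \<Rightarrow> 'a::real_inner) \<Rightarrow> bool" where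
  "is_onb phi \<longleftrightarrow> (\<forall>i j. inner (phi i) (phi j) = (if i = j then 1 else 0))
                    \<and> closure (span (range phi)) = UNIV"

definition DHalf :: "(nat \<Rightarrow> real) \<Rightarrow> (nat \<Rightarrow> 'a::real_inner) \<Rightarrow> 'a set" where
  "DHalf lam phi = {x. summable (\<lambda>k. lam k * (inner x (phi k))\<^sup>2)}"

definition Ahalf :: "(nat \<Rightarrow> real) \<Rightarrow> (nat \<Rightarrow> 'a::real_inner) \<Rightarrow> 'a \<Rightarrow> 'a" where
  "Ahalf lam phi x = (\<Sum>k. (sqrt (lam k) * inner x (phi k)) *\<^sub>R phi k)"

definition norm_half :: "(nat \<Rightarrow> real) \<Rightarrow> (nat \<Rightarrow> 'a::real_inner) \<Rightarrow> 'a \<Rightarrow> real" where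
  "norm_half lam phi x = sqrt ((norm x)\<^sup>2 + (norm (Ahalf lam phi x))\<^sup>2)"

definition heat_sg :: "(nat \<Rightarrow> real) \<Rightarrow> (nat \<Rightarrow> 'a::real_inner) \<Rightarrow> real \<Rightarrow> 'a \<Rightarrow> 'a" where
  "heat_sg lam phi t x = (\<Sum>k. (exp (- lam k * t) * inner x (phi k)) *\<^sub>R phi k)"

end

theory Submission
  imports Defs
begin


definition orthn :: "(nat \<Rightarrow> 'a::real_inner) \<Rightarrow> bool" where
  "orthn phi \<longleftrightarrow> (\<forall>i j. inner (phi i) (phi j) = (if i = j then 1 else 0))"

lemma norm_sum_orthn:
  assumes "orthn phi" "finite F"
  shows "(norm (\<Sum>k\<in>F. a k *\<^sub>R phi k))\<^sup>2 = (\<Sum>k\<in>F. (a k)\<^sup>2)"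
proof -
  have "(norm (\<Sum>k\<in>F. a k *\<^sub>R phi k))\<^sup>2 = (\<Sum>i\<in>F. \<Sum>j\<in>F. a i * a j * inner (phi i) (phi j))"
    by (simp add: power2_norm_eq_inner inner_sum_left inner_sum_right sum_distrib_left mult_ac inner_commute)
  also have "\<dots> = (\<Sum>i\<in>F. \<Sum>j\<in>F. if i = j then a i * a j else 0)"
    using assms(1) unfolding orthn_def by (intro sum.cong refl) auto
  also have "\<dots> = (\<Sum>k\<in>F. (a k)\<^sup>2)"
    using assms(2) by (simp add: power2_eq_square)
  finally show ?thesis .
qed

lemma inner_sum_orthn:
  assumes "orthn phi" "finite F"
  shows "inner (\<Sum>k\<in>F. a k *\<^sub>R phi k) (phi j) = (if j \<in> F then a j else 0)"
proof -
  have "inner (\<Sum>k\<in>F. a k *\<^sub>R phi k) (phi j) = (\<Sum>k\<in>F. if k = j then a k else 0)"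
    using assms(1) unfolding orthn_def by (auto simp: inner_sum_left intro!: sum.cong)
  then show ?thesis using assms(2) by simp
qed

lemma summable_orthn:
  fixes phi :: "nat \<Rightarrow> 'a::{real_inner,banach}"
  assumes "orthn phi" "summable (\<lambda>k. (a k)\<^sup>2)"
  shows "summable (\<lambda>k. a k *\<^sub>R phi k)"
proof -
  have C: "\<forall>e>0. \<exists>N. \<forall>m\<ge>N. \<forall>n. norm (sum (\<lambda>k. (a k)\<^sup>2) {m..<n}) < e"
    using assms(2) summable_Cauchy by blast
  show ?thesis unfolding summable_Cauchy
  proof (intro allI impI)
    fix e :: real assume e: "e > 0"
    then obtain N where N: "\<forall>m\<ge>N. \<forall>n. norm (sum (\<lambda>k. (a k)\<^sup>2) {m..<n}) < e\<^sup>2"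
      using C by (meson zero_less_power)
    show "\<exists>N. \<forall>m\<ge>N. \<forall>n. norm (\<Sum>k = m..<n. a k *\<^sub>R phi k) < e"
    proof (intro exI allI impI)
      fix m n assume "m \<ge> N"
      then have "(norm (\<Sum>k = m..<n. a k *\<^sub>R phi k))\<^sup>2 < e\<^sup>2"
        using N norm_sum_orthn[OF assms(1), of "{m..<n}" a] by (metis abs_less_iff finite_atLeastLessThan real_norm_def)
      then show "norm (\<Sum>k = m..<n. a k *\<^sub>R phi k) < e"
        using e by (simp add: power_less_imp_less_base)
    qed
  qed
qed

lemma inner_suminf_orthn:
  fixes phi :: "nat \<Rightarrow> 'a::{real_inner,banach}"
  assumes "orthn phi" "summable (\<lambda>k. (a k)\<^sup>2)"
  shows "inner (\<Sum>k. a k *\<^sub>R phi k) (phi j) = a j"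
proof -
  have s: "summable (\<lambda>k. a k *\<^sub>R phi k)" using summable_orthn[OF assms] .
  have "inner (\<Sum>k. a k *\<^sub>R phi k) (phi j) = (\<Sum>k. inner (a k *\<^sub>R phi k) (phi j))"
    using bounded_linear.suminf[OF bounded_linear_inner_left s] by simp
  also have "\<dots> = (\<Sum>k. if k = j then a j else 0)"
    using assms(1) unfolding orthn_def by (intro suminf_cong) auto
  also have "\<dots> = a j"
    by (rule sums_unique[symmetric]) (rule sums_single)
  finally show ?thesis .
qed

lemma norm_suminf_orthn:
  fixes phi :: "nat \<Rightarrow> 'a::{real_inner,banach}"
  assumes "orthn phi" "summable (\<lambda>k. (a k)\<^sup>2)"
  shows "(norm (\<Sum>k. a k *\<^sub>R phi k))\<^sup>2 = (\<Sum>k. (a k)\<^sup>2)"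
proof -
  have s: "summable (\<lambda>k. a k *\<^sub>R phi k)" using summable_orthn[OF assms] .
  have "(\<lambda>n. (norm (\<Sum>k<n. a k *\<^sub>R phi k))\<^sup>2) \<longlonglongrightarrow> (norm (\<Sum>k. a k *\<^sub>R phi k))\<^sup>2"
    by (intro tendsto_intros summable_LIMSEQ s)
  moreover have "(\<lambda>n. (norm (\<Sum>k<n. a k *\<^sub>R phi k))\<^sup>2) = (\<lambda>n. \<Sum>k<n. (a k)\<^sup>2)"
    using norm_sum_orthn[OF assms(1)] by auto
  ultimately have "(\<lambda>n. \<Sum>k<n. (a k)\<^sup>2) \<longlonglongrightarrow> (norm (\<Sum>k. a k *\<^sub>R phi k))\<^sup>2" by simp
  moreover have "(\<lambda>n. \<Sum>k<n. (a k)\<^sup>2) \<longlonglongrightarrow> (\<Sum>k. (a k)\<^sup>2)"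
    using summable_LIMSEQ[OF assms(2)] .
  ultimately show ?thesis using LIMSEQ_unique by blast
qed

lemma bessel_orthn:
  assumes "orthn phi"
  shows "(\<Sum>k<n. (inner x (phi k))\<^sup>2) \<le> (norm x)\<^sup>2"
proof -
  define y where "y = (\<Sum>k<n. inner x (phi k) *\<^sub>R phi k)"
  have xy: "inner x y = (\<Sum>k<n. (inner x (phi k))\<^sup>2)"
    by (simp add: y_def inner_sum_right power2_eq_square)
  have yy: "(norm y)\<^sup>2 = (\<Sum>k<n. (inner x (phi k))\<^sup>2)"
    unfolding y_def by (rule norm_sum_orthn[OF assms]) simp
  have "0 \<le> (norm (x - y))\<^sup>2" by simp
  also have "\<dots> = (norm x)\<^sup>2 - 2 * inner x y + (norm y)\<^sup>2"
    by (simp add: power2_norm_eq_inner inner_diff_left inner_diff_right inner_commute)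
  finally show ?thesis using xy yy by simp
qed

lemma summable_coeff:
  assumes "orthn phi"
  shows "summable (\<lambda>k. (inner x (phi k))\<^sup>2)"
  using bessel_orthn[OF assms] by (intro summableI_nonneg_bounded) auto

lemma expansion_orthn:
  fixes phi :: "nat \<Rightarrow> 'a::{real_inner,banach}"
  assumes "is_onb phi"
  shows "x = (\<Sum>k. inner x (phi k) *\<^sub>R phi k)"
proof -
  have o: "orthn phi" using assms unfolding is_onb_def orthn_def by blast
  define y where "y = (\<Sum>k. inner x (phi k) *\<^sub>R phi k)"
  define z where "z = x - y"
  have zk: "inner z (phi k) = 0" for k
    unfolding z_def y_def using inner_suminf_orthn[OF o summable_coeff[OF o]]
    by (simp add: inner_diff_left)
  have "span (range phi) \<subseteq> {w. inner z w = 0}"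
  proof (rule span_minimal)
    show "range phi \<subseteq> {w. inner z w = 0}" using zk by (auto simp: inner_commute)
    show "subspace {w. inner z w = 0}"
      by (auto simp: subspace_def inner_add_right)
  qed
  moreover have "closed {w. inner z w = 0}"
    by (intro closed_Collect_eq continuous_intros)
  ultimately have "closure (span (range phi)) \<subseteq> {w. inner z w = 0}"
    by (rule closure_minimal)
  then have "inner z z = 0" using assms unfolding is_onb_def by blast
  then have "z = 0" by simp
  then show ?thesis unfolding z_def y_def by simp
qed

lemma parseval_orthn:
  fixes phi :: "nat \<Rightarrow> 'a::{real_inner,banach}"
  assumes "is_onb phi"
  shows "(norm x)\<^sup>2 = (\<Sum>k. (inner x (phi k))\<^sup>2)"
proof -
  have o: "orthn phi" using assms unfolding is_onb_def orthn_def by blast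
  have "(norm x)\<^sup>2 = (norm (\<Sum>k. inner x (phi k) *\<^sub>R phi k))\<^sup>2"
    using expansion_orthn[OF assms] by metis
  also have "\<dots> = (\<Sum>k. (inner x (phi k))\<^sup>2)"
    by (rule norm_suminf_orthn[OF o summable_coeff[OF o]])
  finally show ?thesis .
qed



lemma onb_orthn: "is_onb phi \<Longrightarrow> orthn phi"
  unfolding is_onb_def orthn_def by blast

lemma Ahalf_sq:
  fixes phi :: "nat \<Rightarrow> 'a::{real_inner,banach}"
  assumes onb: "is_onb phi" and lam: "\<And>k. 0 \<le> lam k" and x: "x \<in> DHalf lam phi"
  shows "(norm (Ahalf lam phi x))\<^sup>2 = (\<Sum>k. lam k * (inner x (phi k))\<^sup>2)"
proof -
  have eq: "(sqrt (lam k) * inner x (phi k))\<^sup>2 = lam k * (inner x (phi k))\<^sup>2" for k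
    using lam[of k] by (simp add: power_mult_distrib)
  have s: "summable (\<lambda>k. (sqrt (lam k) * inner x (phi k))\<^sup>2)"
    using x unfolding DHalf_def eq by simp
  show ?thesis unfolding Ahalf_def norm_suminf_orthn[OF onb_orthn[OF onb] s] eq ..
qed

lemma nh_sq:
  fixes phi :: "nat \<Rightarrow> 'a::{real_inner,banach}"
  assumes onb: "is_onb phi" and lam: "\<And>k. 0 \<le> lam k" and x: "x \<in> DHalf lam phi"
  shows "summable (\<lambda>k. (1 + lam k) * (inner x (phi k))\<^sup>2)"
    "(norm_half lam phi x)\<^sup>2 = (\<Sum>k. (1 + lam k) * (inner x (phi k))\<^sup>2)"
proof -
  have s1: "summable (\<lambda>k. (inner x (phi k))\<^sup>2)" by (rule summable_coeff[OF onb_orthn[OF onb]])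
  have s2: "summable (\<lambda>k. lam k * (inner x (phi k))\<^sup>2)" using x unfolding DHalf_def by simp
  have e: "(\<lambda>k. (1 + lam k) * (inner x (phi k))\<^sup>2) = (\<lambda>k. (inner x (phi k))\<^sup>2 + lam k * (inner x (phi k))\<^sup>2)"
    by (simp add: algebra_simps)
  show "summable (\<lambda>k. (1 + lam k) * (inner x (phi k))\<^sup>2)"
    unfolding e by (intro summable_add s1 s2)
  have "(norm_half lam phi x)\<^sup>2 = (norm x)\<^sup>2 + (norm (Ahalf lam phi x))\<^sup>2"
    unfolding norm_half_def by simp
  also have "\<dots> = (\<Sum>k. (inner x (phi k))\<^sup>2) + (\<Sum>k. lam k * (inner x (phi k))\<^sup>2)"
    using parseval_orthn[OF onb] Ahalf_sq[OF onb lam x] by simp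
  also have "\<dots> = (\<Sum>k. (1 + lam k) * (inner x (phi k))\<^sup>2)"
    unfolding e by (rule suminf_add[OF s1 s2])
  finally show "(norm_half lam phi x)\<^sup>2 = (\<Sum>k. (1 + lam k) * (inner x (phi k))\<^sup>2)" .
qed

lemma DHalfI:
  fixes phi :: "nat \<Rightarrow> 'a::{real_inner,banach}"
  assumes onb: "is_onb phi" and s: "summable (\<lambda>k. (1 + lam k) * (inner x (phi k))\<^sup>2)"
  shows "x \<in> DHalf lam phi"
proof -
  have s1: "summable (\<lambda>k. (inner x (phi k))\<^sup>2)" by (rule summable_coeff[OF onb_orthn[OF onb]])
  have "summable (\<lambda>k. (1 + lam k) * (inner x (phi k))\<^sup>2 - (inner x (phi k))\<^sup>2)"
    by (intro summable_diff s s1)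
  then show ?thesis unfolding DHalf_def by (simp add: algebra_simps)
qed

lemma nh_pair:
  "norm_half lam phi x = norm (x, Ahalf lam phi x)"
  unfolding norm_half_def norm_Pair ..

lemma Ahalf_diff:
  fixes phi :: "nat \<Rightarrow> 'a::{real_inner,banach}"
  assumes onb: "is_onb phi" and lam: "\<And>k. 0 \<le> lam k" and x: "x \<in> DHalf lam phi" and y: "y \<in> DHalf lam phi"
  shows "Ahalf lam phi (x - y) = Ahalf lam phi x - Ahalf lam phi y"
proof -
  have eq: "(sqrt (lam k) * inner z (phi k))\<^sup>2 = lam k * (inner z (phi k))\<^sup>2" for k z
    using lam[of k] by (simp add: power_mult_distrib)
  have sx: "summable (\<lambda>k. (sqrt (lam k) * inner x (phi k)) *\<^sub>R phi k)"
    using x unfolding DHalf_def by (intro summable_orthn[OF onb_orthn[OF onb]]) (simp add: eq)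
  have sy: "summable (\<lambda>k. (sqrt (lam k) * inner y (phi k)) *\<^sub>R phi k)"
    using y unfolding DHalf_def by (intro summable_orthn[OF onb_orthn[OF onb]]) (simp add: eq)
  have "(\<lambda>k. (sqrt (lam k) * inner (x - y) (phi k)) *\<^sub>R phi k) = (\<lambda>k. (sqrt (lam k) * inner x (phi k)) *\<^sub>R phi k - (sqrt (lam k) * inner y (phi k)) *\<^sub>R phi k)"
    by (simp add: inner_diff_left right_diff_distrib scaleR_diff_left)
  then show ?thesis unfolding Ahalf_def using suminf_diff[OF sx sy] by simp
qed

lemma nh_lip:
  fixes phi :: "nat \<Rightarrow> 'a::{real_inner,banach}"
  assumes onb: "is_onb phi" and lam: "\<And>k. 0 \<le> lam k" and x: "x \<in> DHalf lam phi" and y: "y \<in> DHalf lam phi"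
  shows "\<bar>norm_half lam phi x - norm_half lam phi y\<bar> \<le> norm_half lam phi (x - y)"
  unfolding nh_pair Ahalf_diff[OF onb lam x y]
  using norm_triangle_ineq3[of "(x, Ahalf lam phi x)" "(y, Ahalf lam phi y)"] by simp

lemma heat_coeff:
  fixes phi :: "nat \<Rightarrow> 'a::{real_inner,banach}"
  assumes onb: "is_onb phi" and lam: "\<And>k. 0 \<le> lam k" and t: "0 \<le> t"
  shows "inner (heat_sg lam phi t x) (phi k) = exp (- lam k * t) * inner x (phi k)"
proof -
  have s1: "summable (\<lambda>k. (inner x (phi k))\<^sup>2)" by (rule summable_coeff[OF onb_orthn[OF onb]])
  have b: "norm ((exp (- lam k * t) * inner x (phi k))\<^sup>2) \<le> (inner x (phi k))\<^sup>2" for k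
  proof -
    have "exp (- lam k * t) \<le> 1" using lam[of k] t by (simp add: mult_nonneg_nonneg)
    then have "(exp (- lam k * t))\<^sup>2 \<le> 1" by (simp add: power_le_one)
    then show ?thesis by (simp add: power_mult_distrib mult_left_le_one_le)
  qed
  have s: "summable (\<lambda>k. (exp (- lam k * t) * inner x (phi k))\<^sup>2)"
    by (rule summable_comparison_test[OF _ s1]) (use b in blast)
  show ?thesis unfolding heat_sg_def by (rule inner_suminf_orthn[OF onb_orthn[OF onb] s])
qed

lemma phi0_facts:
  fixes phi :: "nat \<Rightarrow> 'a::{real_inner,banach}"
  assumes onb: "is_onb phi" and lam: "\<And>k. 0 \<le> lam k"
  shows "phi 0 \<in> DHalf lam phi" "(norm_half lam phi (phi 0))\<^sup>2 = 1 + lam 0"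
proof -
  have c: "inner (phi 0) (phi k) = (if k = 0 then 1 else 0)" for k
    using onb unfolding is_onb_def by auto
  have e: "(\<lambda>k. (1 + lam k) * (inner (phi 0) (phi k))\<^sup>2) = (\<lambda>k. if k = 0 then 1 + lam 0 else 0)"
    by (auto simp: c)
  have s: "(\<lambda>k. (1 + lam k) * (inner (phi 0) (phi k))\<^sup>2) sums (1 + lam 0)"
    unfolding e by (rule sums_single)
  show d: "phi 0 \<in> DHalf lam phi" using DHalfI[OF onb sums_summable[OF s]] .
  show "(norm_half lam phi (phi 0))\<^sup>2 = 1 + lam 0"
    using nh_sq(2)[OF onb lam d] sums_unique[OF s] by simp
qed



lemma set_integral_nonneg:
  fixes f :: "'b \<Rightarrow> real"
  assumes "\<And>x. x \<in> A \<Longrightarrow> 0 \<le> f x"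
  shows "0 \<le> (LINT x:A|M. f x)"
  unfolding set_lebesgue_integral_def
  by (rule integral_nonneg_AE) (auto simp: indicator_def assms)

lemma exp_int_bound:
  fixes mu t :: real
  assumes mu: "mu > 0" and t: "0 \<le> t"
  shows "set_integrable lborel {0..t} (\<lambda>s. exp (- 2 * mu * (t - s)))"
    "(LINT s:{0..t}|lborel. exp (- 2 * mu * (t - s))) \<le> 1 / (2 * mu)"
proof -
  have c: "continuous_on {0..t} (\<lambda>s. exp (- 2 * mu * (t - s)))"
    by (intro continuous_intros)
  show i: "set_integrable lborel {0..t} (\<lambda>s. exp (- 2 * mu * (t - s)))"
    by (rule borel_integrable_atLeastAtMost'[OF c])
  define F where "F s = exp (- 2 * mu * (t - s)) / (2 * mu)" for s
  have d: "(F has_vector_derivative exp (- 2 * mu * (t - s))) (at s within {0..t})" for s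
  proof -
    have "(F has_real_derivative exp (- 2 * mu * (t - s))) (at s)"
      unfolding F_def using mu
      by (auto intro!: derivative_eq_intros simp: field_simps)
    then show ?thesis
      by (simp add: has_real_derivative_iff_has_vector_derivative has_vector_derivative_at_within)
  qed
  have "((\<lambda>s. exp (- 2 * mu * (t - s))) has_integral (F t - F 0)) {0..t}"
    by (rule fundamental_theorem_of_calculus[OF t d])
  then have "(LINT s:{0..t}|lborel. exp (- 2 * mu * (t - s))) = F t - F 0"
    using set_borel_integral_eq_integral(2)[OF i] by (simp add: integral_unique)
  also have "\<dots> \<le> 1 / (2 * mu)" unfolding F_def using mu by (simp add: divide_simps)
  finally show "(LINT s:{0..t}|lborel. exp (- 2 * mu * (t - s))) \<le> 1 / (2 * mu)" .
qed

lemma amgm_pt: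
  fixes r l t s h :: real
  assumes r: "r > 0"
  shows "exp (- l * (t - s)) * \<bar>h\<bar> \<le> r / 2 * exp (- 2 * (1 + l) * (t - s)) + 1 / (2 * r) * (exp (2 * (t - s)) * h\<^sup>2)"
proof -
  define X where "X = exp (- (1 + l) * (t - s))"
  define Y where "Y = exp (t - s) * \<bar>h\<bar>"
  have XY: "X * Y = exp (- l * (t - s)) * \<bar>h\<bar>"
    unfolding X_def Y_def by (simp add: mult.assoc[symmetric] exp_add[symmetric] algebra_simps)
  have X2: "X\<^sup>2 = exp (- 2 * (1 + l) * (t - s))"
    unfolding X_def by (simp add: power2_eq_square exp_add[symmetric] algebra_simps)
  have Y2: "Y\<^sup>2 = exp (2 * (t - s)) * h\<^sup>2"
    unfolding Y_def by (simp add: power2_eq_square exp_add[symmetric] algebra_simps)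
  have "0 \<le> (r * X - Y)\<^sup>2 / r" using r by simp
  then have "2 * (X * Y) \<le> r * X\<^sup>2 + Y\<^sup>2 / r"
    using r by (simp add: power2_eq_square field_simps)
  then show ?thesis unfolding XY[symmetric] X2[symmetric] Y2[symmetric]
    using r by (simp add: field_simps)
qed

lemma cs_exp:
  fixes h :: "real \<Rightarrow> real" and t l :: real
  assumes t: "0 \<le> t" and l: "0 \<le> l"
    and i1: "set_integrable lborel {0..t} (\<lambda>s. exp (- l * (t - s)) * h s)"
    and i2: "set_integrable lborel {0..t} (\<lambda>s. exp (2 * (t - s)) * (h s)\<^sup>2)"
  shows "(1 + l) * (LINT s:{0..t}|lborel. exp (- l * (t - s)) * h s)\<^sup>2
           \<le> 1 / 2 * (LINT s:{0..t}|lborel. exp (2 * (t - s)) * (h s)\<^sup>2)"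
proof -
  define mu where "mu = 1 + l"
  have mu: "mu > 0" using l unfolding mu_def by simp
  define J where "J = (LINT s:{0..t}|lborel. \<bar>exp (- l * (t - s)) * h s\<bar>)"
  define I where "I = (LINT s:{0..t}|lborel. exp (2 * (t - s)) * (h s)\<^sup>2)"
  define E where "E = (LINT s:{0..t}|lborel. exp (- 2 * mu * (t - s)))"
  have iE: "set_integrable lborel {0..t} (\<lambda>s. exp (- 2 * mu * (t - s)))"
    and E: "E \<le> 1 / (2 * mu)" using exp_int_bound[OF mu t] unfolding E_def by auto
  have iabs: "set_integrable lborel {0..t} (\<lambda>s. \<bar>exp (- l * (t - s)) * h s\<bar>)"
    by (rule set_integrable_abs[OF i1])
  have J0: "0 \<le> J" unfolding J_def by (rule set_integral_nonneg) auto
  have fJ: "\<bar>LINT s:{0..t}|lborel. exp (- l * (t - s)) * h s\<bar> \<le> J"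
    unfolding J_def using set_integral_norm_bound[OF i1] by simp
  have Jr: "J \<le> r / 2 * E + 1 / (2 * r) * I" if r: "r > 0" for r
  proof -
    have "J \<le> (LINT s:{0..t}|lborel. r / 2 * exp (- 2 * mu * (t - s)) + 1 / (2 * r) * (exp (2 * (t - s)) * (h s)\<^sup>2))"
      unfolding J_def
    proof (rule set_integral_mono[OF iabs])
      show "set_integrable lborel {0..t} (\<lambda>s. r / 2 * exp (- 2 * mu * (t - s)) + 1 / (2 * r) * (exp (2 * (t - s)) * (h s)\<^sup>2))"
        using iE i2 by (intro set_integral_add(1) set_integrable_mult_right) auto
      fix s assume "s \<in> {0..t}"
      show "\<bar>exp (- l * (t - s)) * h s\<bar> \<le> r / 2 * exp (- 2 * mu * (t - s)) + 1 / (2 * r) * (exp (2 * (t - s)) * (h s)\<^sup>2)"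
        using amgm_pt[OF r, of l t s "h s"] unfolding mu_def by (simp add: abs_mult)
    qed
    also have "\<dots> = r / 2 * E + 1 / (2 * r) * I"
      unfolding E_def I_def using iE i2
      by (subst set_integral_add(2)) (auto intro: set_integrable_mult_right)
    finally show ?thesis .
  qed
  have J2: "J\<^sup>2 \<le> I / (2 * mu)"
  proof (cases "J = 0")
    case True
    have "0 \<le> I" unfolding I_def by (rule set_integral_nonneg) auto
    then show ?thesis using True mu by simp
  next
    case False
    then have Jp: "J > 0" using J0 by simp
    have r: "2 * mu * J > 0" using Jp mu by simp
    have "J \<le> (2 * mu * J) / 2 * E + 1 / (2 * (2 * mu * J)) * I" by (rule Jr[OF r])
    also have "\<dots> \<le> (2 * mu * J) / 2 * (1 / (2 * mu)) + 1 / (2 * (2 * mu * J)) * I"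
      using E r by (intro add_right_mono mult_left_mono) (auto simp: mult.commute)
    also have "\<dots> = J / 2 + I / (4 * mu * J)" using mu Jp by (simp add: field_simps)
    finally have "J / 2 \<le> I / (4 * mu * J)" by linarith
    then have "J / 2 * (4 * mu * J) \<le> I" using mu Jp by (simp add: field_simps)
    then show ?thesis using mu by (simp add: field_simps power2_eq_square)
  qed
  have "(LINT s:{0..t}|lborel. exp (- l * (t - s)) * h s)\<^sup>2 \<le> J\<^sup>2"
    using fJ J0 by (metis abs_le_square_iff abs_of_nonneg)
  also have "\<dots> \<le> I / (2 * mu)" by (rule J2)
  finally have "mu * (LINT s:{0..t}|lborel. exp (- l * (t - s)) * h s)\<^sup>2 \<le> I / 2"
    using mu by (simp add: field_simps)
  then show ?thesis unfolding mu_def I_def by simp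
qed



lemma split_int:
  fixes f :: "real \<Rightarrow> real"
  assumes i: "set_integrable lborel {0..T} f" and "0 \<le> t0" "t0 \<le> t" "t \<le> T"
  shows "(LINT s:{0..t}|lborel. f s) = (LINT s:{0..t0}|lborel. f s) + (LINT s:{t0<..t}|lborel. f s)"
proof -
  have e: "{0..t} = {0..t0} \<union> {t0<..t}" using assms by auto
  have i1: "set_integrable lborel {0..t0} f" by (rule set_integrable_subset[OF i]) (use assms in auto)
  have i2: "set_integrable lborel {t0<..t} f" by (rule set_integrable_subset[OF i]) (use assms in auto)
  show ?thesis unfolding e by (rule set_integral_Un[OF _ i1 i2]) auto
qed

lemma set_meas_mult:
  fixes f g :: "real \<Rightarrow> real"
  assumes "set_borel_measurable lborel A f" "set_borel_measurable lborel A g"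
  shows "set_borel_measurable lborel A (\<lambda>x. f x * g x)"
proof -
  have "(\<lambda>x. indicator A x *\<^sub>R (f x * g x)) = (\<lambda>x. (indicator A x *\<^sub>R f x) * (indicator A x *\<^sub>R g x))"
    by (auto simp: indicator_def)
  then show ?thesis using assms unfolding set_borel_measurable_def by simp
qed

lemma gronwall_dyadic:
  fixes U q :: "real \<Rightarrow> real" and T a :: real and m :: nat
  assumes T: "0 \<le> T" and Uc: "continuous_on {0..T} U" and U0: "\<And>t. t \<in> {0..T} \<Longrightarrow> 0 \<le> U t"
    and q0: "\<And>t. 0 \<le> q t" and qi: "set_integrable lborel {0..T} q" and a0: "0 \<le> a"
    and hyp: "\<And>t. t \<in> {0..T} \<Longrightarrow> U t \<le> a + (LINT s:{0..t}|lborel. q s * U s)"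
    and QT: "(LINT s:{0..T}|lborel. q s) \<le> m / 2"
  shows "\<And>t. t \<in> {0..T} \<Longrightarrow> U t \<le> a * 2 ^ m"
proof -
  define Q where "Q t = (LINT s:{0..t}|lborel. q s)" for t
  define S where "S t = a + (LINT s:{0..t}|lborel. q s * U s)" for t
  obtain xm where "xm \<in> {0..T}" "\<forall>y\<in>{0..T}. U y \<le> U xm"
    using continuous_attains_sup[of "{0..T}" U] Uc T by auto
  then obtain MU where MU: "\<And>t. t \<in> {0..T} \<Longrightarrow> U t \<le> MU" by blast
  have MU0: "0 \<le> MU" using MU[of 0] U0[of 0] T by auto
  have Um: "set_borel_measurable lborel {0..T} U"
    using set_measurable_continuous_on[OF _ Uc] unfolding set_borel_measurable_def by simp
  have qm: "set_borel_measurable lborel {0..T} q"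
    using qi unfolding set_integrable_def set_borel_measurable_def by simp
  have qUi: "set_integrable lborel {0..T} (\<lambda>s. q s * U s)"
  proof (rule set_integrable_bound[OF _ set_meas_mult[OF qm Um]])
    show "set_integrable lborel {0..T} (\<lambda>s. MU * q s)" using qi by simp
    show "AE x\<in>{0..T} in lborel. norm (q x * U x) \<le> norm (MU * q x)"
      using q0 U0 MU MU0 by (auto intro!: AE_I2 simp: abs_mult mult.commute intro: mult_right_mono)
  qed
  have qsub: "set_integrable lborel {0..t} q" if "t \<le> T" for t
    by (rule set_integrable_subset[OF qi]) (use that in auto)
  have Qint: "Q t = integral {0..t} q" if "t \<le> T" for t
    unfolding Q_def by (rule set_borel_integral_eq_integral(2)[OF qsub[OF that]])
  have Qc: "continuous_on {0..T} Q"
  proof -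
    have "q integrable_on {0..T}" by (rule set_borel_integral_eq_integral(1)[OF qi])
    then have "continuous_on {0..T} (\<lambda>t. integral {0..t} q)" by (rule indefinite_integral_continuous_1)
    then show ?thesis by (rule continuous_on_eq) (auto simp: Qint)
  qed
  have Q0: "Q 0 = 0" using Qint[OF T] by simp
  have Qdiff: "Q t - Q t0 = (LINT s:{t0<..t}|lborel. q s)" if "0 \<le> t0" "t0 \<le> t" "t \<le> T" for t t0
    unfolding Q_def using split_int[OF qi that] by simp
  have Qmono: "Q t0 \<le> Q t" if "0 \<le> t0" "t0 \<le> t" "t \<le> T" for t t0
    using Qdiff[OF that] set_integral_nonneg[of "{t0<..t}" q lborel] q0 by simp
  have key: "S s \<le> S t0 + M * (Q s - Q t0)"
    if "0 \<le> t0" "t0 \<le> s" "s \<le> T" "\<And>y. y \<in> {t0..s} \<Longrightarrow> U y \<le> M" for t0 s M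
  proof -
    have "S s = S t0 + (LINT y:{t0<..s}|lborel. q y * U y)"
      unfolding S_def using split_int[OF qUi that(1-3)] by simp
    also have "(LINT y:{t0<..s}|lborel. q y * U y) \<le> (LINT y:{t0<..s}|lborel. M * q y)"
    proof (rule set_integral_mono)
      show "set_integrable lborel {t0<..s} (\<lambda>y. q y * U y)"
        by (rule set_integrable_subset[OF qUi]) (use that in auto)
      show "set_integrable lborel {t0<..s} (\<lambda>y. M * q y)"
      proof -
        have "set_integrable lborel {t0<..s} q"
          by (rule set_integrable_subset[OF qi]) (use that in auto)
        then show ?thesis by simp
      qed
      fix y assume "y \<in> {t0<..s}"
      then show "q y * U y \<le> M * q y" using that(4)[of y] q0[of y]
        by (auto simp: mult.commute intro: mult_right_mono)
    qed
    also have "(LINT y:{t0<..s}|lborel. M * q y) = M * (Q s - Q t0)"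
      using Qdiff[OF that(1-3)] by simp
    finally show ?thesis by simp
  qed
  have claim: "\<forall>t\<in>{0..T}. Q t \<le> n / 2 \<longrightarrow> S t \<le> a * 2 ^ n" for n :: nat
  proof (induction n)
    case 0
    show ?case
    proof (intro ballI impI)
      fix t assume t: "t \<in> {0..T}" and "Q t \<le> real 0 / 2"
      then have "Q t \<le> 0" by simp
      have "S t \<le> S 0 + MU * (Q t - Q 0)"
        by (rule key) (use t MU in auto)
      also have "S 0 = a"
      proof -
        have "set_integrable lborel {0..0} (\<lambda>s. q s * U s)"
          by (rule set_integrable_subset[OF qUi]) (use T in auto)
        from set_borel_integral_eq_integral(2)[OF this] show ?thesis unfolding S_def by simp
      qed
      finally show "S t \<le> a * 2 ^ 0" using \<open>Q t \<le> 0\<close> Q0 MU0 mult_nonneg_nonpos[of MU "Q t"] by simp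
    qed
  next
    case (Suc n)
    show ?case
    proof (intro ballI impI)
      fix t assume t: "t \<in> {0..T}" and Qt: "Q t \<le> real (Suc n) / 2"
      show "S t \<le> a * 2 ^ Suc n"
      proof (cases "Q t \<le> n / 2")
        case True
        then have "S t \<le> a * 2 ^ n" using Suc.IH t by blast
        also have "\<dots> \<le> a * 2 ^ Suc n" using a0 by simp
        finally show ?thesis .
      next
        case False
        obtain t0 where t0: "0 \<le> t0" "t0 \<le> t" "Q t0 = n / 2"
          using IVT'[of Q 0 "n / 2" t] False Q0 t continuous_on_subset[OF Qc, of "{0..t}"] by auto
        have St0: "S t0 \<le> a * 2 ^ n" using Suc.IH t0 t by auto
        obtain sm where sm: "sm \<in> {t0..t}" "\<And>y. y \<in> {t0..t} \<Longrightarrow> U y \<le> U sm"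
          using continuous_attains_sup[of "{t0..t}" U] continuous_on_subset[OF Uc, of "{t0..t}"] t0 t by auto
        define M where "M = U sm"
        have M0: "0 \<le> M" unfolding M_def using U0 sm t t0 by auto
        have half: "Q s - Q t0 \<le> 1 / 2" if "s \<in> {t0..t}" for s
          using Qmono[of s t] that t Qt t0 by auto
        have Ss: "S s \<le> S t0 + M / 2" if s: "s \<in> {t0..t}" for s
        proof -
          have "S s \<le> S t0 + M * (Q s - Q t0)"
            by (rule key) (use s t t0 sm M_def in auto)
          also have "\<dots> \<le> S t0 + M / 2" using mult_left_mono[OF half[OF s] M0] by simp
          finally show ?thesis .
        qed
        have "M \<le> S sm" unfolding M_def using hyp[of sm] sm t t0 by (auto simp: S_def)
        then have "M \<le> 2 * S t0" using Ss[OF sm(1)] by simp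
        then have "S t \<le> 2 * S t0" using Ss[of t] t0 t by auto
        then show ?thesis using St0 by simp
      qed
    qed
  qed
  fix t assume t: "t \<in> {0..T}"
  have "U t \<le> S t" using hyp[OF t] unfolding S_def .
  also have "S t \<le> a * 2 ^ m"
    using claim[of m] t Qmono[of t T] QT T unfolding Q_def by auto
  finally show "U t \<le> a * 2 ^ m" .
qed



lemma inner_set_integral:
  fixes f :: "'b \<Rightarrow> 'a::{real_inner,banach,second_countable_topology}"
  assumes "set_integrable M A f"
  shows "set_integrable M A (\<lambda>x. inner (f x) y)"
    "inner (LINT x:A|M. f x) y = (LINT x:A|M. inner (f x) y)"
proof -
  have i: "integrable M (\<lambda>x. indicator A x *\<^sub>R f x)" using assms unfolding set_integrable_def .
  have e: "(\<lambda>x. indicator A x *\<^sub>R inner (f x) y) = (\<lambda>x. inner (indicator A x *\<^sub>R f x) y)"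
    by simp
  show "set_integrable M A (\<lambda>x. inner (f x) y)"
    unfolding set_integrable_def e by (rule integrable_inner_left) (rule i)
  show "inner (LINT x:A|M. f x) y = (LINT x:A|M. inner (f x) y)"
    unfolding set_lebesgue_integral_def e using integral_inner_left[of y M "\<lambda>x. indicator A x *\<^sub>R f x"] i
    by simp
qed

lemma set_integral_sum_lt:
  fixes f :: "nat \<Rightarrow> 'b \<Rightarrow> real"
  assumes "\<And>k. set_integrable M A (f k)"
  shows "set_integrable M A (\<lambda>x. \<Sum>k<n. f k x)" "(LINT x:A|M. (\<Sum>k<n. f k x)) = (\<Sum>k<n. LINT x:A|M. f k x)"
proof (induction n)
  case 0
  { case 1 show ?case by (simp add: set_integrable_def) }
  { case 2 show ?case by simp }
next
  case (Suc n)
  { case 1 show ?case using Suc.IH(1) assms[of n] by simp }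
  { case 2 show ?case using Suc.IH assms[of n] by (simp add: set_integral_add(2)) }
qed

lemma abs_coeff_le:
  fixes phi :: "nat \<Rightarrow> 'a::real_inner"
  assumes "is_onb phi"
  shows "\<bar>inner x (phi k)\<bar> \<le> norm x"
proof -
  have "norm (phi k) = 1" using assms unfolding is_onb_def by (simp add: norm_eq_sqrt_inner)
  then show ?thesis using Cauchy_Schwarz_ineq2[of x "phi k"] by simp
qed

lemma two_pow_bound:
  fixes CB :: real
  shows "(2::real) ^ nat \<lceil>3 * CB\<^sup>2\<rceil> \<le> 2 * exp (5 / 2 * CB\<^sup>2)"
proof -
  have l2: "ln (2::real) \<le> 5 / 6"
  proof -
    have "1 + 5/6 + (5/6)\<^sup>2 / 2 \<le> exp (5/6::real)" by (rule exp_lower_Taylor_quadratic) simp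
    moreover have "(2::real) \<le> 1 + 5/6 + (5/6)\<^sup>2 / 2" by (simp add: power2_eq_square)
    ultimately have "2 \<le> exp (5/6::real)" by linarith
    then show ?thesis by (metis exp_gt_zero ln_exp ln_le_cancel_iff zero_less_numeral)
  qed
  define m where "m = nat \<lceil>3 * CB\<^sup>2\<rceil>"
  have m: "real m \<le> 3 * CB\<^sup>2 + 1"
  proof -
    have "0 \<le> 3 * CB\<^sup>2" by simp
    then have "real m = of_int \<lceil>3 * CB\<^sup>2\<rceil>" unfolding m_def by simp
    then show ?thesis by linarith
  qed
  have "(2::real) ^ m = exp (real m * ln 2)" by (simp add: exp_of_nat_mult)
  also have "\<dots> \<le> exp ((3 * CB\<^sup>2 + 1) * ln 2)"
    using m by (intro exp_mono mult_right_mono) auto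
  also have "\<dots> = 2 * exp (3 * CB\<^sup>2 * ln 2)"
    by (simp add: distrib_right exp_add)
  also have "\<dots> \<le> 2 * exp (5 / 2 * CB\<^sup>2)"
    using mult_left_mono[OF l2, of "3 * CB\<^sup>2"] by simp
  finally show ?thesis unfolding m_def .
qed



lemma final_arith:
  fixes W a P u0 CB N T L l0 m2 :: real
  assumes W: "W \<le> 1/2 * exp (2 * T) * CB\<^sup>2 * (a * m2) * P"
    and a: "a \<le> u0 * (2 + 3 * L * CB\<^sup>2 * N\<^sup>2)" and m2: "m2 \<le> 2 * exp (5/2 * CB\<^sup>2)"
    and P: "P \<le> N\<^sup>2 * u0" and P0: "0 \<le> P" and a0: "0 \<le> a" and m20: "0 \<le> m2" and u0: "0 \<le> u0"
    and T: "0 \<le> T" and CB: "0 < CB" and L: "L = 1 + l0" and l0: "0 \<le> l0"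
  shows "W \<le> (2 * exp (CB * (5/2 * CB + 2 * sqrt T) + 2 * T) * CB\<^sup>2 * N\<^sup>2 *
           (1 + 5/2 * CB\<^sup>2 * (1 + sqrt l0)\<^sup>2 * N\<^sup>2
              + 3/2 * CB\<^sup>2 * (CB\<^sup>2 * (1 + sqrt l0)\<^sup>2 * N\<^sup>2 + 1))) * u0\<^sup>2"
proof -
  define C5 where "C5 = 1 + 5/2 * CB\<^sup>2 * (1 + sqrt l0)\<^sup>2 * N\<^sup>2 + 3/2 * CB\<^sup>2 * (CB\<^sup>2 * (1 + sqrt l0)\<^sup>2 * N\<^sup>2 + 1)"
  define C4 where "C4 = CB * (5/2 * CB + 2 * sqrt T) + 2 * T"
  have Ll: "L \<le> (1 + sqrt l0)\<^sup>2" using L l0 by (simp add: power2_eq_square algebra_simps)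
  have c5: "2 + 3 * L * CB\<^sup>2 * N\<^sup>2 \<le> 2 * C5"
  proof -
    have "3 * L * CB\<^sup>2 * N\<^sup>2 \<le> 5 * (1 + sqrt l0)\<^sup>2 * CB\<^sup>2 * N\<^sup>2"
      using Ll L l0 by (intro mult_right_mono) auto
    moreover have "0 \<le> 3/2 * CB\<^sup>2 * (CB\<^sup>2 * (1 + sqrt l0)\<^sup>2 * N\<^sup>2 + 1)" by simp
    moreover have "2 * C5 = 2 + 5 * (1 + sqrt l0)\<^sup>2 * CB\<^sup>2 * N\<^sup>2 + 2 * (3/2 * CB\<^sup>2 * (CB\<^sup>2 * (1 + sqrt l0)\<^sup>2 * N\<^sup>2 + 1))"
      unfolding C5_def by (simp add: algebra_simps)
    ultimately show ?thesis by linarith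
  qed
  have c4: "exp (2 * T) * exp (5/2 * CB\<^sup>2) \<le> exp C4"
  proof -
    have "2 * T + 5/2 * CB\<^sup>2 \<le> C4" unfolding C4_def using CB T by (simp add: power2_eq_square algebra_simps)
    then show ?thesis by (simp add: exp_add[symmetric])
  qed
  have "W \<le> 1/2 * exp (2 * T) * CB\<^sup>2 * (u0 * (2 + 3 * L * CB\<^sup>2 * N\<^sup>2) * (2 * exp (5/2 * CB\<^sup>2))) * (N\<^sup>2 * u0)"
  proof -
    define A' where "A' = u0 * (2 + 3 * L * CB\<^sup>2 * N\<^sup>2) * (2 * exp (5/2 * CB\<^sup>2))"
    have X1: "a * m2 \<le> A'" unfolding A'_def
      by (rule mult_mono[OF a m2]) (use u0 L l0 m20 in auto)
    have A0: "0 \<le> A'" unfolding A'_def using u0 L l0 by simp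
    have X2: "(a * m2) * P \<le> A' * (N\<^sup>2 * u0)" by (rule mult_mono[OF X1 P A0 P0])
    have c0: "0 \<le> 1/2 * exp (2 * T) * CB\<^sup>2" by simp
    have "W \<le> (1/2 * exp (2 * T) * CB\<^sup>2) * ((a * m2) * P)" using W by (simp add: mult.assoc)
    also have "\<dots> \<le> (1/2 * exp (2 * T) * CB\<^sup>2) * (A' * (N\<^sup>2 * u0))" by (rule mult_left_mono[OF X2 c0])
    finally show ?thesis unfolding A'_def by (simp add: mult.assoc)
  qed
  also have "\<dots> = (exp (2 * T) * exp (5/2 * CB\<^sup>2)) * CB\<^sup>2 * N\<^sup>2 * (2 + 3 * L * CB\<^sup>2 * N\<^sup>2) * u0\<^sup>2"
    by (simp add: power2_eq_square algebra_simps)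
  also have "\<dots> \<le> exp C4 * CB\<^sup>2 * N\<^sup>2 * (2 * C5) * u0\<^sup>2"
    using c4 c5 L l0 by (intro mult_right_mono mult_mono) auto
  finally show ?thesis unfolding C4_def C5_def by (simp add: algebra_simps)
qed



lemma sib:
  fixes f g :: "real \<Rightarrow> real"
  assumes "set_integrable lborel A f" "set_borel_measurable lborel A g" "\<And>x. x \<in> A \<Longrightarrow> \<bar>g x\<bar> \<le> f x"
  shows "set_integrable lborel A g"
  by (rule set_integrable_bound[OF assms(1,2)]) (auto intro!: AE_I2 dest: assms(3) intro: order_trans)

lemma set_meas_subset:
  fixes f :: "real \<Rightarrow> real"
  assumes "set_borel_measurable lborel A f" "B \<in> sets lborel" "B \<subseteq> A"
  shows "set_borel_measurable lborel B f"
proof -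
  have "(\<lambda>x. indicator B x *\<^sub>R f x) = (\<lambda>x. indicator B x * (indicator A x *\<^sub>R f x))"
    using assms(3) by (auto intro!: ext split: split_indicator)
  then show ?thesis using assms(1,2) unfolding set_borel_measurable_def by simp
qed

lemma set_meas_cong:
  fixes f g :: "real \<Rightarrow> real"
  assumes "set_borel_measurable lborel A f" "\<And>x. x \<in> A \<Longrightarrow> f x = g x"
  shows "set_borel_measurable lborel A g"
proof -
  have "(\<lambda>x. indicator A x *\<^sub>R f x) = (\<lambda>x. indicator A x *\<^sub>R g x)"
    using assms(2) by (auto intro!: ext split: split_indicator)
  then show ?thesis using assms(1) unfolding set_borel_measurable_def by simp
qed

lemma set_meas_cont:
  fixes f :: "real \<Rightarrow> real"
  assumes "continuous_on {a..b} f"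
  shows "set_borel_measurable lborel {a..b} f"
  using set_measurable_continuous_on[OF _ assms] unfolding set_borel_measurable_def by simp

lemma set_meas_int:
  fixes f :: "real \<Rightarrow> real"
  assumes "set_integrable lborel A f"
  shows "set_borel_measurable lborel A f"
  using assms unfolding set_integrable_def set_borel_measurable_def by simp


lemma sq_ineq:
  fixes y r :: real
  shows "(y + r)\<^sup>2 \<le> 3 / 2 * y\<^sup>2 + 3 * r\<^sup>2"
proof -
  have "0 \<le> (y - 2 * r)\<^sup>2" by simp
  then show ?thesis by (simp add: power2_eq_square algebra_simps)
qed

theorem proposition2p6:
  fixes lam :: "nat \<Rightarrow> real"
    and phi :: "nat \<Rightarrow> 'a::{real_inner, banach, second_countable_topology}"
    and B :: "'a \<Rightarrow> 'a"
    and CB T N :: real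
    and v0 :: 'a
    and p :: "real \<Rightarrow> real"
    and v w :: "real \<Rightarrow> 'a"
  assumes onb: "is_onb phi"
    and lam_nonneg: "0 \<le> lam 0"
    and lam_mono: "mono lam"
    and lam_infty: "filterlim lam at_top sequentially"
    and B_add: "\<forall>x\<in>DHalf lam phi. \<forall>y\<in>DHalf lam phi. B (x + y) = B x + B y"
    and B_scale: "\<forall>x\<in>DHalf lam phi. \<forall>c. B (c *\<^sub>R x) = c *\<^sub>R B x"
    and CB_pos: "CB > 0"
    and B_bound: "\<forall>x\<in>DHalf lam phi. norm (B x) \<le> CB * norm_half lam phi x"
    and T_pos: "T > 0"
    and N_pos: "N > 0"
    and v0_dom: "v0 \<in> DHalf lam phi"
    and v0_small: "N * norm_half lam phi v0 \<le> 1"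
    and p_meas: "set_borel_measurable lborel {0..T} p"
    and p_L2: "set_integrable lborel {0..T} (\<lambda>t. (p t)\<^sup>2)"
    and p_bound: "sqrt (set_lebesgue_integral lborel {0..T} (\<lambda>t. (p t)\<^sup>2)) \<le> N * norm v0"
    and v_dom: "\<forall>t\<in>{0..T}. v t \<in> DHalf lam phi"
    and v_cont: "\<forall>t\<in>{0..T}. ((\<lambda>s. norm_half lam phi (v s - v t)) \<longlongrightarrow> 0) (at t within {0..T})"
    and v_int: "\<forall>t\<in>{0..T}. set_integrable lborel {0..t}
                 (\<lambda>s. heat_sg lam phi (t - s) (p s *\<^sub>R (B (v s) + B (phi 0))))"
    and v_mild: "\<forall>t\<in>{0..T}. v t = heat_sg lam phi t v0
                 - set_lebesgue_integral lborel {0..t}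
                     (\<lambda>s. heat_sg lam phi (t - s) (p s *\<^sub>R (B (v s) + B (phi 0))))"
    and w_int: "\<forall>t\<in>{0..T}. set_integrable lborel {0..t}
                 (\<lambda>s. heat_sg lam phi (t - s) (p s *\<^sub>R B (v s)))"
    and w_mild: "\<forall>t\<in>{0..T}. w t = - set_lebesgue_integral lborel {0..t}
                     (\<lambda>s. heat_sg lam phi (t - s) (p s *\<^sub>R B (v s)))"
  shows "norm_half lam phi (w T) \<le>
     sqrt (2 * exp (CB * (5/2 * CB + 2 * sqrt T) + 2 * T) * CB\<^sup>2 * N\<^sup>2 *
           (1 + 5/2 * CB\<^sup>2 * (1 + sqrt (lam 0))\<^sup>2 * N\<^sup>2
              + 3/2 * CB\<^sup>2 * (CB\<^sup>2 * (1 + sqrt (lam 0))\<^sup>2 * N\<^sup>2 + 1)))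
     * (norm_half lam phi v0)\<^sup>2"
proof -
  have lam: "\<And>k. 0 \<le> lam k"
    using lam_nonneg lam_mono by (meson le0 monoD order_trans)
  define nh where "nh = norm_half lam phi"
  define L where "L = 1 + lam 0"
  define u0 where "u0 = (nh v0)\<^sup>2"
  define P where "P = (LINT s:{0..T}|lborel. (p s)\<^sup>2)"
  define G where "G s = p s *\<^sub>R (B (v s) + B (phi 0))" for s
  define F where "F s = p s *\<^sub>R B (v s)" for s
  have L1: "1 \<le> L" unfolding L_def using lam_nonneg by simp
  have phi0: "phi 0 \<in> DHalf lam phi" and nphi0: "nh (phi 0) = sqrt L"
    using phi0_facts[where phi=phi and lam=lam, OF onb lam] unfolding nh_def L_def
    by (auto intro!: real_sqrt_unique[symmetric] simp: norm_half_def)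
  have nh0: "\<And>x. 0 \<le> nh x" unfolding nh_def norm_half_def by simp
  have P0: "0 \<le> P" unfolding P_def by (rule set_integral_nonneg) simp
  have v0n: "(norm v0)\<^sup>2 \<le> u0" unfolding u0_def nh_def norm_half_def by simp
  have PN: "P \<le> N\<^sup>2 * u0"
  proof -
    have "P \<le> (N * norm v0)\<^sup>2" using p_bound P0 unfolding P_def by (metis real_sqrt_le_iff real_sqrt_unique sqrt_le_D)
    also have "\<dots> \<le> N\<^sup>2 * u0" using v0n by (simp add: power_mult_distrib mult_left_mono)
    finally show ?thesis .
  qed
  have Nu0: "N\<^sup>2 * u0 \<le> 1"
  proof -
    have "(N * nh v0)\<^sup>2 \<le> 1\<^sup>2" using v0_small N_pos nh0[of v0] unfolding nh_def
      by (intro power_mono) auto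
    then show ?thesis unfolding u0_def by (simp add: power_mult_distrib)
  qed
  have u00: "0 \<le> u0" unfolding u0_def by simp
  have nhc: "continuous_on {0..T} (\<lambda>t. nh (v t))"
    unfolding continuous_on_def
  proof (intro ballI)
    fix t assume t: "t \<in> {0..T}"
    have ev: "eventually (\<lambda>s. norm (nh (v s) - nh (v t)) \<le> nh (v s - v t)) (at t within {0..T})"
      unfolding eventually_at
      by (rule exI[of _ 1]) (use t v_dom nh_lip[where phi=phi and lam=lam, OF onb lam] in \<open>auto simp: nh_def\<close>)
    have "((\<lambda>s. nh (v s) - nh (v t)) \<longlongrightarrow> 0) (at t within {0..T})"
      by (rule Lim_null_comparison[OF ev]) (use v_cont t in \<open>simp add: nh_def\<close>)
    then show "((\<lambda>s. nh (v s)) \<longlongrightarrow> nh (v t)) (at t within {0..T})"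
      using Lim_null by blast
  qed
  obtain tm where "tm \<in> {0..T}" "\<forall>y\<in>{0..T}. nh (v y) \<le> nh (v tm)"
    using continuous_attains_sup[OF _ _ nhc] T_pos by auto
  then obtain Mv where Mv: "\<And>t. t \<in> {0..T} \<Longrightarrow> nh (v t) \<le> Mv" and Mv0: "0 \<le> Mv"
    using nh0 by blast
  have Gn: "norm (G s) \<le> \<bar>p s\<bar> * (CB * (nh (v s) + sqrt L))" if s: "s \<in> {0..T}" for s
  proof -
    have "norm (B (v s) + B (phi 0)) \<le> norm (B (v s)) + norm (B (phi 0))" by (rule norm_triangle_ineq)
    also have "\<dots> \<le> CB * nh (v s) + CB * nh (phi 0)"
      using B_bound v_dom s phi0 unfolding nh_def by (intro add_mono) auto
    finally have "norm (B (v s) + B (phi 0)) \<le> CB * (nh (v s) + sqrt L)" unfolding nphi0 by (simp add: distrib_left)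
    then show ?thesis unfolding G_def by (simp add: mult_left_mono)
  qed
  have Fn: "norm (F s) \<le> \<bar>p s\<bar> * (CB * nh (v s))" if s: "s \<in> {0..T}" for s
    unfolding F_def using B_bound v_dom s unfolding nh_def by (simp add: mult_left_mono)
  have p2i: "set_integrable lborel {0..t} (\<lambda>s. (p s)\<^sup>2)" if "t \<le> T" for t
    by (rule set_integrable_subset[OF p_L2]) (use that in auto)
  have p2m: "set_borel_measurable lborel {0..t} (\<lambda>s. (p s)\<^sup>2)" if "t \<le> T" for t
    by (rule set_meas_int[OF p2i[OF that]])
  have nhm: "set_borel_measurable lborel {0..t} (\<lambda>s. (nh (v s))\<^sup>2)" if "t \<le> T" for t
    by (rule set_meas_cont) (intro continuous_intros continuous_on_subset[OF nhc], use that in auto)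
  have expm: "set_borel_measurable lborel {0..t} (\<lambda>s. exp (c * (t - s)))" for t c :: real
    by (rule set_meas_cont) (intro continuous_intros)
  define X where "X s = (p s)\<^sup>2 * CB\<^sup>2 * (3 / 2 * (nh (v s))\<^sup>2 + 3 * L)" for s
  have Xm: "set_borel_measurable lborel {0..t} X" if "t \<le> T" for t
    unfolding X_def
    by (intro set_meas_mult p2m[OF that] set_meas_cont continuous_intros
        continuous_on_subset[OF nhc]) (use that in auto)
  have Xb: "\<bar>X s\<bar> \<le> (p s)\<^sup>2 * (CB\<^sup>2 * (3 / 2 * Mv\<^sup>2 + 3 * L))" if "s \<in> {0..T}" for s
  proof -
    have "(nh (v s))\<^sup>2 \<le> Mv\<^sup>2" using Mv[OF that] nh0 by (intro power_mono) auto
    then have "3 / 2 * (nh (v s))\<^sup>2 + 3 * L \<le> 3 / 2 * Mv\<^sup>2 + 3 * L" by simp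
    then have "(p s)\<^sup>2 * CB\<^sup>2 * (3 / 2 * (nh (v s))\<^sup>2 + 3 * L) \<le> (p s)\<^sup>2 * CB\<^sup>2 * (3 / 2 * Mv\<^sup>2 + 3 * L)"
      by (intro mult_left_mono) auto
    moreover have "0 \<le> X s" unfolding X_def using L1 by (intro mult_nonneg_nonneg) auto
    ultimately show ?thesis unfolding X_def by (simp add: mult.assoc)
  qed
  have Gb: "(\<Sum>k<n. (inner (G s) (phi k))\<^sup>2) \<le> X s" if s: "s \<in> {0..T}" for s n
  proof -
    have "(\<Sum>k<n. (inner (G s) (phi k))\<^sup>2) \<le> (norm (G s))\<^sup>2"
      by (rule bessel_orthn[OF onb_orthn[OF onb]])
    also have "\<dots> \<le> (\<bar>p s\<bar> * (CB * (nh (v s) + sqrt L)))\<^sup>2"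
      by (rule power_mono[OF Gn[OF s]]) simp
    also have "\<dots> = (p s)\<^sup>2 * CB\<^sup>2 * (nh (v s) + sqrt L)\<^sup>2"
      by (simp add: power_mult_distrib)
    also have "\<dots> \<le> X s"
    proof -
      have "(nh (v s) + sqrt L)\<^sup>2 \<le> 3 / 2 * (nh (v s))\<^sup>2 + 3 * L"
      proof -
        have "(sqrt L)\<^sup>2 = L" using L1 by simp
        then show ?thesis using sq_ineq[of "nh (v s)" "sqrt L"] by simp
      qed
      then show ?thesis unfolding X_def by (intro mult_left_mono) auto
    qed
    finally show ?thesis .
  qed
  have Xi: "set_integrable lborel {0..t} (\<lambda>s. exp (2 * (t - s)) * X s)" if t: "t \<in> {0..T}" for t
  proof (rule sib[OF _ set_meas_mult[OF expm Xm]])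
    show "set_integrable lborel {0..t} (\<lambda>s. exp (2 * T) * ((p s)\<^sup>2 * (CB\<^sup>2 * (3 / 2 * Mv\<^sup>2 + 3 * L))))"
      using t by (intro set_integrable_mult_right set_integrable_mult_left p2i) auto
    fix s assume s: "s \<in> {0..t}"
    have "exp (2 * (t - s)) \<le> exp (2 * T)" using s t by auto
    moreover have "\<bar>X s\<bar> \<le> (p s)\<^sup>2 * (CB\<^sup>2 * (3 / 2 * Mv\<^sup>2 + 3 * L))" using Xb s t by auto
    ultimately show "\<bar>exp (2 * (t - s)) * X s\<bar> \<le> exp (2 * T) * ((p s)\<^sup>2 * (CB\<^sup>2 * (3 / 2 * Mv\<^sup>2 + 3 * L)))"
      by (simp add: abs_mult mult_mono)
  qed (use t in auto)
  have vest: "(nh (v t))\<^sup>2 \<le> 2 * u0 + (LINT s:{0..t}|lborel. exp (2 * (t - s)) * X s)" if t: "t \<in> {0..T}" for t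
  proof -
    have t0: "0 \<le> t" and tT: "t \<le> T" using t by auto
    define g where "g k s = inner (G s) (phi k)" for k s
    have hi: "set_integrable lborel {0..t} (\<lambda>s. heat_sg lam phi (t - s) (G s))"
      using v_int t unfolding G_def by blast
    have hc: "inner (heat_sg lam phi (t - s) (G s)) (phi k) = exp (- lam k * (t - s)) * g k s"
      if "s \<in> {0..t}" for s k
      unfolding g_def by (rule heat_coeff[where phi=phi and lam=lam, OF onb lam]) (use that in auto)
    have int1: "set_integrable lborel {0..t} (\<lambda>s. exp (- lam k * (t - s)) * g k s)" for k
    proof -
      have "set_integrable lborel {0..t} (\<lambda>s. inner (heat_sg lam phi (t - s) (G s)) (phi k))"
        by (rule inner_set_integral(1)[OF hi])
      moreover have "set_integrable lborel {0..t} (\<lambda>s. inner (heat_sg lam phi (t - s) (G s)) (phi k))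
          = set_integrable lborel {0..t} (\<lambda>s. exp (- lam k * (t - s)) * g k s)"
        by (rule set_integrable_cong) (auto simp: hc)
      ultimately show ?thesis by simp
    qed
    have coef: "inner (v t) (phi k) = exp (- lam k * t) * inner v0 (phi k) - (LINT s:{0..t}|lborel. exp (- lam k * (t - s)) * g k s)" for k
    proof -
      have "inner (v t) (phi k) = inner (heat_sg lam phi t v0) (phi k) - inner (LINT s:{0..t}|lborel. heat_sg lam phi (t - s) (G s)) (phi k)"
        using v_mild t unfolding G_def by (simp add: inner_diff_left)
      also have "inner (LINT s:{0..t}|lborel. heat_sg lam phi (t - s) (G s)) (phi k) = (LINT s:{0..t}|lborel. inner (heat_sg lam phi (t - s) (G s)) (phi k))"
        by (rule inner_set_integral(2)[OF hi])
      also have "\<dots> = (LINT s:{0..t}|lborel. exp (- lam k * (t - s)) * g k s)"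
        by (rule set_lebesgue_integral_cong) (auto simp: hc)
      finally show ?thesis using heat_coeff[where phi=phi and lam=lam, OF onb lam t0] by simp
    qed
    have gm: "set_borel_measurable lborel {0..t} (\<lambda>s. exp (2 * (t - s)) * (g k s)\<^sup>2)" for k
    proof -
      have m1: "set_borel_measurable lborel {0..t} (\<lambda>s. exp (- lam k * (t - s)) * g k s)"
        by (rule set_meas_int[OF int1])
      have mm: "set_borel_measurable lborel {0..t} (\<lambda>s. exp (2 * (t - s)) * ((exp (lam k * (t - s)) * (exp (- lam k * (t - s)) * g k s)) * (exp (lam k * (t - s)) * (exp (- lam k * (t - s)) * g k s))))"
        by (intro set_meas_mult expm m1)
      have ee: "exp (lam k * (t - s)) * (exp (- lam k * (t - s)) * g k s) = g k s" for s
        by (simp add: mult.assoc[symmetric] exp_add[symmetric])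
      show ?thesis using mm unfolding ee power2_eq_square .
    qed
    have gsq: "(g k s)\<^sup>2 \<le> X s" if s: "s \<in> {0..T}" for s k
    proof -
      have "(g k s)\<^sup>2 \<le> (\<Sum>j<Suc k. (g j s)\<^sup>2)" by (rule member_le_sum) auto
      also have "\<dots> \<le> X s" unfolding g_def by (rule Gb[OF s])
      finally show ?thesis .
    qed
    have int2: "set_integrable lborel {0..t} (\<lambda>s. exp (2 * (t - s)) * (g k s)\<^sup>2)" for k
    proof (rule sib[OF Xi[OF t] gm])
      fix s assume s: "s \<in> {0..t}"
      then have "(g k s)\<^sup>2 \<le> X s" using gsq t by auto
      then show "\<bar>exp (2 * (t - s)) * (g k s)\<^sup>2\<bar> \<le> exp (2 * (t - s)) * X s"
        by (simp add: abs_mult)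
    qed
    have perk: "(1 + lam k) * (inner (v t) (phi k))\<^sup>2 \<le> 2 * ((1 + lam k) * (inner v0 (phi k))\<^sup>2) + (LINT s:{0..t}|lborel. exp (2 * (t - s)) * (g k s)\<^sup>2)" for k
    proof -
      define I where "I = (LINT s:{0..t}|lborel. exp (- lam k * (t - s)) * g k s)"
      define c where "c = inner v0 (phi k)"
      define e where "e = exp (- lam k * t)"
      have cs: "(1 + lam k) * I\<^sup>2 \<le> 1/2 * (LINT s:{0..t}|lborel. exp (2 * (t - s)) * (g k s)\<^sup>2)"
        unfolding I_def by (rule cs_exp[OF t0 lam[of k] int1 int2])
      have e1: "e \<le> 1" "0 \<le> e" unfolding e_def using lam[of k] t0 by (auto simp: mult_nonneg_nonneg)
      have ec: "(e * c)\<^sup>2 \<le> c\<^sup>2"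
      proof -
        have "e\<^sup>2 \<le> 1" using e1 by (simp add: power_le_one)
        then show ?thesis by (simp add: power_mult_distrib mult_left_le_one_le)
      qed
      have "(inner (v t) (phi k))\<^sup>2 = (e * c - I)\<^sup>2" unfolding coef I_def c_def e_def ..
      also have "\<dots> \<le> 2 * (e * c)\<^sup>2 + 2 * I\<^sup>2"
      proof -
        have "0 \<le> (e * c + I)\<^sup>2" by simp
        then show ?thesis by (simp add: power2_eq_square algebra_simps)
      qed
      also have "\<dots> \<le> 2 * c\<^sup>2 + 2 * I\<^sup>2" using ec by simp
      finally have "(1 + lam k) * (inner (v t) (phi k))\<^sup>2 \<le> (1 + lam k) * (2 * c\<^sup>2 + 2 * I\<^sup>2)"
        using lam[of k] by (intro mult_left_mono) auto
      also have "\<dots> = 2 * ((1 + lam k) * c\<^sup>2) + 2 * ((1 + lam k) * I\<^sup>2)" by (simp add: algebra_simps)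
      also have "\<dots> \<le> 2 * ((1 + lam k) * c\<^sup>2) + (LINT s:{0..t}|lborel. exp (2 * (t - s)) * (g k s)\<^sup>2)"
        using cs by simp
      finally show ?thesis unfolding c_def .
    qed
    have vtD: "v t \<in> DHalf lam phi" using v_dom t by blast
    note nsv = nh_sq[where phi=phi and lam=lam, OF onb lam vtD]
    note nsv0 = nh_sq[where phi=phi and lam=lam, OF onb lam v0_dom]
    have "(\<Sum>k. (1 + lam k) * (inner (v t) (phi k))\<^sup>2) \<le> 2 * u0 + (LINT s:{0..t}|lborel. exp (2 * (t - s)) * X s)"
    proof (rule suminf_le_const[OF nsv(1)])
      fix n
      have "(\<Sum>k<n. (1 + lam k) * (inner (v t) (phi k))\<^sup>2) \<le> (\<Sum>k<n. 2 * ((1 + lam k) * (inner v0 (phi k))\<^sup>2) + (LINT s:{0..t}|lborel. exp (2 * (t - s)) * (g k s)\<^sup>2))"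
        by (rule sum_mono) (rule perk)
      also have "\<dots> = 2 * (\<Sum>k<n. (1 + lam k) * (inner v0 (phi k))\<^sup>2) + (LINT s:{0..t}|lborel. (\<Sum>k<n. exp (2 * (t - s)) * (g k s)\<^sup>2))"
        using set_integral_sum_lt(2)[of lborel "{0..t}" "\<lambda>k s. exp (2 * (t - s)) * (g k s)\<^sup>2" n] int2
        by (simp add: sum.distrib sum_distrib_left)
      also have "\<dots> \<le> 2 * u0 + (LINT s:{0..t}|lborel. exp (2 * (t - s)) * X s)"
      proof (rule add_mono)
        have "(\<Sum>k<n. (1 + lam k) * (inner v0 (phi k))\<^sup>2) \<le> (\<Sum>k. (1 + lam k) * (inner v0 (phi k))\<^sup>2)"
          by (rule sum_le_suminf[OF nsv0(1)]) (use lam in \<open>auto intro!: mult_nonneg_nonneg\<close>)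
        then show "2 * (\<Sum>k<n. (1 + lam k) * (inner v0 (phi k))\<^sup>2) \<le> 2 * u0"
          using nsv0(2) unfolding u0_def nh_def by simp
        show "(LINT s:{0..t}|lborel. (\<Sum>k<n. exp (2 * (t - s)) * (g k s)\<^sup>2)) \<le> (LINT s:{0..t}|lborel. exp (2 * (t - s)) * X s)"
        proof (rule set_integral_mono[OF set_integral_sum_lt(1)[OF int2] Xi[OF t]])
          fix s assume s: "s \<in> {0..t}"
          have "(\<Sum>k<n. (g k s)\<^sup>2) \<le> X s" unfolding g_def by (rule Gb) (use s t in auto)
          then show "(\<Sum>k<n. exp (2 * (t - s)) * (g k s)\<^sup>2) \<le> exp (2 * (t - s)) * X s"
            by (simp add: sum_distrib_left[symmetric])
        qed
      qed
      finally show "(\<Sum>k<n. (1 + lam k) * (inner (v t) (phi k))\<^sup>2) \<le> 2 * u0 + (LINT s:{0..t}|lborel. exp (2 * (t - s)) * X s)" .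
    qed
    then show ?thesis using nsv(2) unfolding nh_def by simp
  qed
  define U where "U t = exp (- 2 * t) * (nh (v t))\<^sup>2" for t
  define q where "q s = 3 / 2 * CB\<^sup>2 * (p s)\<^sup>2" for s
  define a where "a = 2 * u0 + 3 * L * CB\<^sup>2 * P"
  define m where "m = nat \<lceil>3 * CB\<^sup>2\<rceil>"
  have Uc: "continuous_on {0..T} U" unfolding U_def by (intro continuous_intros nhc)
  have U0: "0 \<le> U t" for t unfolding U_def by simp
  have q0: "0 \<le> q t" for t unfolding q_def by simp
  have qi: "set_integrable lborel {0..T} q" unfolding q_def using p_L2 by simp
  have a0: "0 \<le> a" unfolding a_def using u00 L1 P0 by simp
  have QT: "(LINT s:{0..T}|lborel. q s) \<le> real m / 2"
  proof -
    have "(LINT s:{0..T}|lborel. q s) = 3 / 2 * CB\<^sup>2 * P" unfolding q_def P_def by simp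
    also have "\<dots> \<le> 3 / 2 * CB\<^sup>2 * 1" using PN Nu0 by (intro mult_left_mono) auto
    also have "\<dots> \<le> real m / 2"
    proof -
      have "3 * CB\<^sup>2 \<le> of_int \<lceil>3 * CB\<^sup>2\<rceil>" by linarith
      moreover have "real m = of_int \<lceil>3 * CB\<^sup>2\<rceil>" unfolding m_def
        using zero_le_power2[of CB] by (simp del: zero_le_power2)
      ultimately show ?thesis by simp
    qed
    finally show ?thesis .
  qed
  have qUi: "set_integrable lborel {0..t} (\<lambda>s. q s * U s)" if t: "t \<in> {0..T}" for t
  proof (rule sib)
    show "set_integrable lborel {0..t} (\<lambda>s. 3 / 2 * CB\<^sup>2 * Mv\<^sup>2 * (p s)\<^sup>2)"
      using p2i t by auto
    show "set_borel_measurable lborel {0..t} (\<lambda>s. q s * U s)"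
      unfolding q_def U_def using t
      by (intro set_meas_mult set_meas_cont continuous_intros p2m continuous_on_subset[OF nhc]) auto
    fix s assume s: "s \<in> {0..t}"
    have e: "exp (- 2 * s) \<le> 1" using s by auto
    have "(nh (v s))\<^sup>2 \<le> Mv\<^sup>2" using Mv[of s] s t nh0 by (intro power_mono) auto
    then have "U s \<le> Mv\<^sup>2" unfolding U_def using e
      by (metis exp_gt_zero less_eq_real_def mult_left_le_one_le order_trans zero_le_power2)
    then have "U s * (CB\<^sup>2 * (p s)\<^sup>2) \<le> Mv\<^sup>2 * (CB\<^sup>2 * (p s)\<^sup>2)"
      by (rule mult_right_mono) simp
    then show "\<bar>q s * U s\<bar> \<le> 3 / 2 * CB\<^sup>2 * Mv\<^sup>2 * (p s)\<^sup>2"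
      using U0[of s] q0[of s] unfolding q_def by (simp add: abs_mult algebra_simps)
  qed
  have hyp: "U t \<le> a + (LINT s:{0..t}|lborel. q s * U s)" if t: "t \<in> {0..T}" for t
  proof -
    have t0: "0 \<le> t" and tT: "t \<le> T" using t by auto
    have "U t \<le> exp (- 2 * t) * (2 * u0 + (LINT s:{0..t}|lborel. exp (2 * (t - s)) * X s))"
      unfolding U_def using vest[OF t] by (intro mult_left_mono) auto
    also have "\<dots> = exp (- 2 * t) * (2 * u0) + (LINT s:{0..t}|lborel. exp (- 2 * s) * X s)"
    proof -
      have "exp (- 2 * t) * (LINT s:{0..t}|lborel. exp (2 * (t - s)) * X s)
          = (LINT s:{0..t}|lborel. exp (- 2 * t) * (exp (2 * (t - s)) * X s))" by simp
      also have "\<dots> = (LINT s:{0..t}|lborel. exp (- 2 * s) * X s)"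
        by (rule set_lebesgue_integral_cong) (auto simp: mult.assoc[symmetric] exp_add[symmetric])
      finally show ?thesis by (simp add: distrib_left)
    qed
    also have "\<dots> \<le> 2 * u0 + (LINT s:{0..t}|lborel. q s * U s + 3 * L * CB\<^sup>2 * (p s)\<^sup>2)"
    proof (rule add_mono)
      show "exp (- 2 * t) * (2 * u0) \<le> 2 * u0" using t0 u00 by (simp add: mult_left_le_one_le)
      have i1: "set_integrable lborel {0..t} (\<lambda>s. exp (- 2 * s) * X s)"
      proof -
        have "set_integrable lborel {0..t} (\<lambda>s. exp (- 2 * t) * (exp (2 * (t - s)) * X s))"
          using Xi[OF t] by simp
        moreover have "set_integrable lborel {0..t} (\<lambda>s. exp (- 2 * t) * (exp (2 * (t - s)) * X s))
           = set_integrable lborel {0..t} (\<lambda>s. exp (- 2 * s) * X s)"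
          by (rule set_integrable_cong) (auto simp: mult.assoc[symmetric] exp_add[symmetric])
        ultimately show ?thesis by simp
      qed
      show "(LINT s:{0..t}|lborel. exp (- 2 * s) * X s) \<le> (LINT s:{0..t}|lborel. q s * U s + 3 * L * CB\<^sup>2 * (p s)\<^sup>2)"
      proof (rule set_integral_mono[OF i1])
        show "set_integrable lborel {0..t} (\<lambda>s. q s * U s + 3 * L * CB\<^sup>2 * (p s)\<^sup>2)"
          using qUi[OF t] p2i[OF tT] by (intro set_integral_add(1)) auto
        fix s assume s: "s \<in> {0..t}"
        have e: "exp (- 2 * s) \<le> 1" using s by auto
        have "exp (- 2 * s) * X s = q s * U s + exp (- 2 * s) * (3 * L * CB\<^sup>2 * (p s)\<^sup>2)"
          unfolding X_def q_def U_def by (simp add: algebra_simps)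
        also have "exp (- 2 * s) * (3 * L * CB\<^sup>2 * (p s)\<^sup>2) \<le> 3 * L * CB\<^sup>2 * (p s)\<^sup>2"
          using e L1 by (intro mult_left_le_one_le) auto
        finally show "exp (- 2 * s) * X s \<le> q s * U s + 3 * L * CB\<^sup>2 * (p s)\<^sup>2" by simp
      qed
    qed
    also have "\<dots> \<le> a + (LINT s:{0..t}|lborel. q s * U s)"
    proof -
      have "(LINT s:{0..t}|lborel. q s * U s + 3 * L * CB\<^sup>2 * (p s)\<^sup>2)
          = (LINT s:{0..t}|lborel. q s * U s) + 3 * L * CB\<^sup>2 * (LINT s:{0..t}|lborel. (p s)\<^sup>2)"
        using qUi[OF t] p2i[OF tT] by (subst set_integral_add(2)) auto
      moreover have "(LINT s:{0..t}|lborel. (p s)\<^sup>2) \<le> P"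
      proof -
        have "P = (LINT s:{0..t}|lborel. (p s)\<^sup>2) + (LINT s:{t<..T}|lborel. (p s)\<^sup>2)"
          unfolding P_def by (rule split_int[OF p_L2 t0 tT order.refl])
        moreover have "0 \<le> (LINT s:{t<..T}|lborel. (p s)\<^sup>2)" by (rule set_integral_nonneg) simp
        ultimately show ?thesis by simp
      qed
      ultimately show ?thesis unfolding a_def using L1 by (simp add: mult_left_mono)
    qed
    finally show ?thesis .
  qed
  have Ub: "U t \<le> a * 2 ^ m" if "t \<in> {0..T}" for t
    by (rule gronwall_dyadic[OF _ Uc _ q0 qi a0 hyp QT that]) (use T_pos U0 in auto)
  define W where "W = 1/2 * exp (2 * T) * CB\<^sup>2 * (a * 2 ^ m) * P"
  define Y where "Y s = exp (2 * T) * CB\<^sup>2 * (a * 2 ^ m) * (p s)\<^sup>2" for s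
  have T0: "0 \<le> T" using T_pos by simp
  have TT: "T \<in> {0..T}" using T0 by simp
  have Yi: "set_integrable lborel {0..T} Y" unfolding Y_def using p_L2 by simp
  define f where "f k s = inner (F s) (phi k)" for k s
  have hi: "set_integrable lborel {0..T} (\<lambda>s. heat_sg lam phi (T - s) (F s))"
    using w_int TT unfolding F_def by blast
  have hc: "inner (heat_sg lam phi (T - s) (F s)) (phi k) = exp (- lam k * (T - s)) * f k s"
    if "s \<in> {0..T}" for s k
    unfolding f_def by (rule heat_coeff[where phi=phi and lam=lam, OF onb lam]) (use that in auto)
  have int1: "set_integrable lborel {0..T} (\<lambda>s. exp (- lam k * (T - s)) * f k s)" for k
  proof -
    have "set_integrable lborel {0..T} (\<lambda>s. inner (heat_sg lam phi (T - s) (F s)) (phi k))"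
      by (rule inner_set_integral(1)[OF hi])
    moreover have "set_integrable lborel {0..T} (\<lambda>s. inner (heat_sg lam phi (T - s) (F s)) (phi k))
        = set_integrable lborel {0..T} (\<lambda>s. exp (- lam k * (T - s)) * f k s)"
      by (rule set_integrable_cong) (auto simp: hc)
    ultimately show ?thesis by simp
  qed
  have coefw: "inner (w T) (phi k) = - (LINT s:{0..T}|lborel. exp (- lam k * (T - s)) * f k s)" for k
  proof -
    have "inner (w T) (phi k) = - inner (LINT s:{0..T}|lborel. heat_sg lam phi (T - s) (F s)) (phi k)"
      using w_mild TT unfolding F_def by simp
    also have "inner (LINT s:{0..T}|lborel. heat_sg lam phi (T - s) (F s)) (phi k) = (LINT s:{0..T}|lborel. inner (heat_sg lam phi (T - s) (F s)) (phi k))"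
      by (rule inner_set_integral(2)[OF hi])
    also have "\<dots> = (LINT s:{0..T}|lborel. exp (- lam k * (T - s)) * f k s)"
      by (rule set_lebesgue_integral_cong) (auto simp: hc)
    finally show ?thesis .
  qed
  have fm: "set_borel_measurable lborel {0..T} (\<lambda>s. exp (2 * (T - s)) * (f k s)\<^sup>2)" for k
  proof -
    have m1: "set_borel_measurable lborel {0..T} (\<lambda>s. exp (- lam k * (T - s)) * f k s)"
      by (rule set_meas_int[OF int1])
    have mm: "set_borel_measurable lborel {0..T} (\<lambda>s. exp (2 * (T - s)) * ((exp (lam k * (T - s)) * (exp (- lam k * (T - s)) * f k s)) * (exp (lam k * (T - s)) * (exp (- lam k * (T - s)) * f k s))))"
      by (intro set_meas_mult expm m1)
    have ee: "exp (lam k * (T - s)) * (exp (- lam k * (T - s)) * f k s) = f k s" for s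
      by (simp add: mult.assoc[symmetric] exp_add[symmetric])
    show ?thesis using mm unfolding ee power2_eq_square .
  qed
  have fY: "exp (2 * (T - s)) * (\<Sum>k<n. (f k s)\<^sup>2) \<le> Y s" if s: "s \<in> {0..T}" for s n
  proof -
    have "(\<Sum>k<n. (f k s)\<^sup>2) \<le> (norm (F s))\<^sup>2"
      unfolding f_def by (rule bessel_orthn[OF onb_orthn[OF onb]])
    also have "\<dots> \<le> (\<bar>p s\<bar> * (CB * nh (v s)))\<^sup>2"
      by (rule power_mono[OF Fn[OF s]]) simp
    also have "\<dots> = (p s)\<^sup>2 * CB\<^sup>2 * (nh (v s))\<^sup>2" by (simp add: power_mult_distrib)
    finally have "exp (2 * (T - s)) * (\<Sum>k<n. (f k s)\<^sup>2) \<le> exp (2 * (T - s)) * ((p s)\<^sup>2 * CB\<^sup>2 * (nh (v s))\<^sup>2)"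
      by (intro mult_left_mono) auto
    also have "\<dots> = exp (2 * T) * CB\<^sup>2 * (p s)\<^sup>2 * U s"
      unfolding U_def by (simp add: exp_add[symmetric] algebra_simps)
    also have "\<dots> \<le> exp (2 * T) * CB\<^sup>2 * (p s)\<^sup>2 * (a * 2 ^ m)"
      by (rule mult_left_mono[OF Ub[OF s]]) simp
    finally show ?thesis unfolding Y_def by (simp add: algebra_simps)
  qed
  have int2: "set_integrable lborel {0..T} (\<lambda>s. exp (2 * (T - s)) * (f k s)\<^sup>2)" for k
  proof (rule sib[OF Yi fm])
    fix s assume s: "s \<in> {0..T}"
    have "(f k s)\<^sup>2 \<le> (\<Sum>j<Suc k. (f j s)\<^sup>2)" by (rule member_le_sum) auto
    then have "exp (2 * (T - s)) * (f k s)\<^sup>2 \<le> exp (2 * (T - s)) * (\<Sum>j<Suc k. (f j s)\<^sup>2)"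
      by (intro mult_left_mono) auto
    also have "\<dots> \<le> Y s" by (rule fY[OF s])
    finally show "\<bar>exp (2 * (T - s)) * (f k s)\<^sup>2\<bar> \<le> Y s" by simp
  qed
  have perkw: "(1 + lam k) * (inner (w T) (phi k))\<^sup>2 \<le> 1/2 * (LINT s:{0..T}|lborel. exp (2 * (T - s)) * (f k s)\<^sup>2)" for k
    unfolding coefw using cs_exp[OF T0 lam[of k] int1 int2] by simp
  have partw: "(\<Sum>k<n. (1 + lam k) * (inner (w T) (phi k))\<^sup>2) \<le> W" for n
  proof -
    have "(\<Sum>k<n. (1 + lam k) * (inner (w T) (phi k))\<^sup>2) \<le> (\<Sum>k<n. 1/2 * (LINT s:{0..T}|lborel. exp (2 * (T - s)) * (f k s)\<^sup>2))"
      by (rule sum_mono) (rule perkw)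
    also have "\<dots> = 1/2 * (LINT s:{0..T}|lborel. (\<Sum>k<n. exp (2 * (T - s)) * (f k s)\<^sup>2))"
      using set_integral_sum_lt(2)[of lborel "{0..T}" "\<lambda>k s. exp (2 * (T - s)) * (f k s)\<^sup>2" n] int2
      by (simp add: sum_distrib_left)
    also have "\<dots> \<le> 1/2 * (LINT s:{0..T}|lborel. Y s)"
    proof (intro mult_left_mono set_integral_mono[OF set_integral_sum_lt(1)[OF int2] Yi])
      fix s assume s: "s \<in> {0..T}"
      show "(\<Sum>k<n. exp (2 * (T - s)) * (f k s)\<^sup>2) \<le> Y s"
        using fY[OF s, of n] by (simp add: sum_distrib_left)
    qed simp
    also have "\<dots> = W" unfolding W_def Y_def P_def by simp
    finally show ?thesis .
  qed
  have sw: "summable (\<lambda>k. (1 + lam k) * (inner (w T) (phi k))\<^sup>2)"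
    by (rule summableI_nonneg_bounded[OF _ partw]) (use lam in \<open>auto intro!: mult_nonneg_nonneg\<close>)
  have wD: "w T \<in> DHalf lam phi" by (rule DHalfI[OF onb sw])
  have nw: "(nh (w T))\<^sup>2 \<le> W"
    using nh_sq(2)[where phi=phi and lam=lam, OF onb lam wD] suminf_le_const[OF sw partw]
    unfolding nh_def by simp
  define K where "K = 2 * exp (CB * (5/2 * CB + 2 * sqrt T) + 2 * T) * CB\<^sup>2 * N\<^sup>2 *
           (1 + 5/2 * CB\<^sup>2 * (1 + sqrt (lam 0))\<^sup>2 * N\<^sup>2
              + 3/2 * CB\<^sup>2 * (CB\<^sup>2 * (1 + sqrt (lam 0))\<^sup>2 * N\<^sup>2 + 1))"
  have WK: "W \<le> K * u0\<^sup>2" unfolding K_def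
  proof (rule final_arith[of W T CB a "2 ^ m" P u0 L N "lam 0"])
    show "W \<le> 1 / 2 * exp (2 * T) * CB\<^sup>2 * (a * 2 ^ m) * P" unfolding W_def ..
    show "a \<le> u0 * (2 + 3 * L * CB\<^sup>2 * N\<^sup>2)"
    proof -
      have "3 * L * CB\<^sup>2 * P \<le> 3 * L * CB\<^sup>2 * (N\<^sup>2 * u0)" using PN L1 by (intro mult_left_mono) auto
      then show ?thesis unfolding a_def by (simp add: algebra_simps)
    qed
    show "(2::real) ^ m \<le> 2 * exp (5 / 2 * CB\<^sup>2)" unfolding m_def by (rule two_pow_bound)
  qed (use PN P0 a0 u00 T0 CB_pos lam_nonneg in \<open>auto simp: L_def\<close>)
  have "nh (w T) = sqrt ((nh (w T))\<^sup>2)" using nh0 by simp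
  also have "\<dots> \<le> sqrt (K * u0\<^sup>2)" by (rule real_sqrt_le_mono) (use nw WK in linarith)
  also have "\<dots> = sqrt K * u0" using u00 by (simp add: real_sqrt_mult)
  finally show ?thesis unfolding nh_def u0_def K_def .
qed
end
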